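(* Let $n\ge 3$, let $\varepsilon$ be an $n\times n$ signature matrix and let $(a_{\mathbf{i}})_{\mathbf{i}\in\mathbb{Z}^n}$ be an $\varepsilon$-$\mathrm{SL}_2$-tiling of $\mathbb{Z}^n$. Then every entry $a_{\mathbf{i}}$ is an odd-indexed Fibonacci number $F_{2m-1}$ ($m\ge1$), and for all $\mathbf{i}\in\mathbb{Z}^n$ and all $k\in\{1,\dots,n\}$ one has $a_{\mathbf{i}+\mathbf{e}_k}^2-a_{\mathbf{i}}a_{\mathbf{i}+2\mathbf{e}_k}=-1=\varepsilon_{kk}$.
   Context: Write $\mathbf{i}=(i_1,\dots,i_n)\in\mathbb{Z}^n$ and $\mathbf{e}_k$ for the $k$-th standard unit vector. Fibonacci numbers are indexed $F_1=1,F_2=1,F_3=2,F_4=3,F_5=5,\dots$ with $F_{m+2}=F_{m+1}+F_m$. A signature matrix is a symmetric $n\times n$ matrix $\varepsilon=(\varepsilon_{k\ell})$ with $\varepsilon_{k\ell}\in\{1,-1\}$ for $k\ne\ell$ and $\varepsilon_{kk}=-1$. Given a signature matrix $\varepsilon$, an array $(a_{\mathbf{i}})_{\mathbf{i}\in\mathbb{Z}^n}$ with all $a_{\mathbf{i}}\in\mathbb{Z}_{>0}$ is an $\varepsilon$-$\mathrm{SL}_2$-tiling of $\mathbb{Z}^n$ if for all $\mathbf{i}\in\mathbb{Z}^n$ and all $k\ne\ell$: $a_{\mathbf{i}+\mathbf{e}_\ell}a_{\mathbf{i}+\mathbf{e}_k}-a_{\mathbf{i}}a_{\mathbf{i}+\mathbf{e}_k+\mathbf{e}_\ell}=\varepsilon_{k\ell}$.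 *)

theory Defs
  imports "HOL-Analysis.Analysis" "HOL-Number_Theory.Fib"
begin

text \<open>Points of Z^n are vectors int ^ 'n, with n = CARD('n); the standard
unit vector e_k is axis k 1. Fibonacci: fib 1 = fib 2 = 1 (library).\<close>


definition unit_vec :: "'n::finite \<Rightarrow> int ^ 'n" where
  "unit_vec k = axis k 1"

definition signature_matrix :: "('n::finite \<Rightarrow> 'n \<Rightarrow> int) \<Rightarrow> bool" where
  "signature_matrix eps \<longleftrightarrow>
     (\<forall>k l. eps k l = eps l k) \<and>
     (\<forall>k l. k \<noteq> l \<longrightarrow> eps k l \<in> {1, -1}) \<and>
     (\<forall>k. eps k k = -1)"

definition SL2_tiling :: "('n::finite \<Rightarrow> 'n \<Rightarrow> int) \<Rightarrow> (int ^ 'n \<Rightarrow> int) \<Rightarrow> bool" where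
  "SL2_tiling eps a \<longleftrightarrow>
     (\<forall>i. a i > 0) \<and>
     (\<forall>i k l. k \<noteq> l \<longrightarrow>
        a (i + unit_vec l) * a (i + unit_vec k) - a i * a (i + unit_vec k + unit_vec l) = eps k l)"

end

theory Submission
  imports Defs
begin

lemma ex_min:
  fixes f :: "'a \<Rightarrow> int"
  assumes "\<forall>x. f x > 0"
  shows "\<exists>x0. \<forall>x. f x0 \<le> f x"
proof -
  obtain x0 where "\<forall>y. nat (f x0) \<le> nat (f y)"
    using ex_has_least_nat[of "\<lambda>_. True" undefined "\<lambda>x. nat (f x)"] by auto
  then show ?thesis using assms by (metis nat_le_eq_zle order_less_imp_le)
qed

lemma tile:
  assumes "SL2_tiling eps a" "k \<noteq> l"
  shows "a (i + unit_vec l) * a (i + unit_vec k) - a i * a (i + unit_vec k + unit_vec l) = eps k l"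
  using assms unfolding SL2_tiling_def by blast

lemma pos: "SL2_tiling eps a \<Longrightarrow> a i > 0"
  unfolding SL2_tiling_def by blast

lemma E_lemma:
  assumes T: "SL2_tiling eps a" and d: "k\<noteq>l" "k\<noteq>m" "l\<noteq>m"
  shows "eps l m * a (i + unit_vec l) * (a (i + unit_vec k)^2 - a i^2)
       - eps k m * a (i + unit_vec k) * (a (i + unit_vec l)^2 - a i^2)
       + eps k l * (eps k m * a (i + unit_vec l) - eps l m * a (i + unit_vec k)) = 0"
proof -
  define p pk pl pm pkl pkm plm q where "p = a i" and "pk = a (i + unit_vec k)"
    and "pl = a (i + unit_vec l)" and "pm = a (i + unit_vec m)"
    and "pkl = a (i + unit_vec k + unit_vec l)" and "pkm = a (i + unit_vec k + unit_vec m)"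
    and "plm = a (i + unit_vec l + unit_vec m)"
    and "q = a (i + unit_vec k + unit_vec l + unit_vec m)"
  note defs = p_def pk_def pl_def pm_def pkl_def pkm_def plm_def q_def
  have h1: "pl*pk - p*pkl = eps k l" using tile[OF T d(1), of i] by (simp add: defs)
  have h2: "pm*pk - p*pkm = eps k m" using tile[OF T d(2), of i] by (simp add: defs)
  have h3: "pm*pl - p*plm = eps l m" using tile[OF T d(3), of i] by (simp add: defs)
  have h4: "pkm*pkl - pk*q = eps l m" using tile[OF T d(3), of "i + unit_vec k"] by (simp add: defs)
  have v1: "i + unit_vec l + unit_vec k = i + unit_vec k + unit_vec l" by (simp add: algebra_simps)
  have v2: "i + unit_vec l + unit_vec k + unit_vec m = i + unit_vec k + unit_vec l + unit_vec m" by (simp add: algebra_simps)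
  have h5: "plm*pkl - pl*q = eps k m" using tile[OF T d(2), of "i + unit_vec l"] by (simp add: defs v1 v2)
  have A: "p^2*pk*q = (pl*pk - eps k l)*(pm*pk - eps k m) - eps l m*p^2"
  proof -
    have "p^2*pk*q = (p*pkm)*(p*pkl) - eps l m*p^2" using h4 by (simp add: algebra_simps power2_eq_square flip: h4)
    also have "\<dots> = (pm*pk - eps k m)*(pl*pk - eps k l) - eps l m*p^2" using h1 h2 by (simp add: algebra_simps flip: h1 h2)
    finally show ?thesis by (simp add: algebra_simps)
  qed
  have B: "p^2*pl*q = (pl*pk - eps k l)*(pm*pl - eps l m) - eps k m*p^2"
  proof -
    have "p^2*pl*q = (p*plm)*(p*pkl) - eps k m*p^2" using h5 by (simp add: algebra_simps power2_eq_square flip: h5)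
    also have "\<dots> = (pm*pl - eps l m)*(pl*pk - eps k l) - eps k m*p^2" using h1 h3 by (simp add: algebra_simps flip: h1 h3)
    finally show ?thesis by (simp add: algebra_simps)
  qed
  have "pl*((pl*pk - eps k l)*(pm*pk - eps k m) - eps l m*p^2) = pk*((pl*pk - eps k l)*(pm*pl - eps l m) - eps k m*p^2)"
    by (metis A B mult.commute mult.left_commute)
  then show ?thesis unfolding defs[symmetric] by (simp add: algebra_simps power2_eq_square)
qed

lemma F1:
  fixes p x y ekl e :: int
  assumes "e*y*(x^2-p^2) - e*x*(y^2-p^2) + ekl*(e*y - e*x) = 0" "e \<noteq> 0" "p>0" "x>0" "y>0" "ekl \<le> 1"
  shows "x = y"
proof -
  have "e*((y-x)*(x*y+p^2-ekl)) = 0" using assms(1) by (simp add: algebra_simps power2_eq_square)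
  then have "(y-x)*(x*y+p^2-ekl) = 0" using assms(2) by simp
  moreover have "x*y > 0" "p^2 > 0" using assms by auto
  ultimately show ?thesis using assms(6) by auto
qed

lemma F2:
  fixes p x y ekl e :: int
  assumes "e*y*(x^2-p^2) - (-e)*x*(y^2-p^2) + ekl*((-e)*y - e*x) = 0" "e \<noteq> 0" "x>0" "y>0"
  shows "x*y = p^2 + ekl"
proof -
  have "e*((y+x)*(x*y-p^2-ekl)) = 0" using assms(1) by (simp add: algebra_simps power2_eq_square)
  then have "(y+x)*(x*y-p^2-ekl) = 0" using assms(2) by simp
  then show ?thesis using assms(3,4) by auto
qed

lemma fib_step: "fib (n+4) + fib n = 3 * fib (n+2)"
  by (simp add: numeral_eq_Suc)


lemma third:
  assumes "CARD('n::finite) \<ge> 3"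
  shows "\<exists>m::'n. m\<noteq>k \<and> m\<noteq>l"
proof (rule ccontr)
  assume "\<not> ?thesis"
  then have "(UNIV::'n set) = {k,l}" by auto
  then have "CARD('n) = card {k,l}" by simp
  also have "\<dots> \<le> 2" by (cases "k = l") auto
  finally have "CARD('n) \<le> 2" .
  then show False using assms by simp
qed

lemma sig_pm: "signature_matrix eps \<Longrightarrow> k \<noteq> l \<Longrightarrow> eps k l = 1 \<or> eps k l = -1"
  unfolding signature_matrix_def by auto

context
  fixes eps :: "'n::finite \<Rightarrow> 'n \<Rightarrow> int" and a :: "int ^ 'n \<Rightarrow> int"
  assumes C: "CARD('n) \<ge> 3" and S: "signature_matrix eps" and T: "SL2_tiling eps a"
begin

lemma S1:
  assumes d: "k\<noteq>l" "k\<noteq>m" "l\<noteq>m" and e: "eps k m = eps l m"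
  shows "eps k l = -1"
proof (rule ccontr)
  assume "eps k l \<noteq> -1"
  then have kl: "eps k l = 1" using sig_pm[OF S d(1)] by auto
  have eq: "a (i + unit_vec k) = a (i + unit_vec l)" for i
  proof -
    have "eps k m * a (i + unit_vec l) * (a (i + unit_vec k)^2 - a i^2)
       - eps k m * a (i + unit_vec k) * (a (i + unit_vec l)^2 - a i^2)
       + eps k l * (eps k m * a (i + unit_vec l) - eps k m * a (i + unit_vec k)) = 0"
      using E_lemma[OF T d, of i] e by simp
    note h = this
    have nz: "eps k m \<noteq> 0" using sig_pm[OF S d(2)] by auto
    show ?thesis using F1[OF h nz pos[OF T] pos[OF T] pos[OF T]] kl by simp
  qed
  obtain j where j: "\<forall>x. a j \<le> a x" using ex_min[of a] pos[OF T] by blast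
  define i where "i = j - unit_vec k"
  have "a (i + unit_vec l) * a (i + unit_vec k) - a i * a (i + unit_vec k + unit_vec l) = 1"
    using tile[OF T d(1)] kl by simp
  moreover have "i + unit_vec k = j" "i + unit_vec k + unit_vec l = j + unit_vec l" by (simp_all add: i_def)
  moreover have "a (i + unit_vec l) = a j" using eq[of i] by (simp add: i_def)
  ultimately have "a j * a j - a i * a (j + unit_vec l) = 1" by simp
  moreover have "a j * a j \<le> a i * a (j + unit_vec l)"
    using j pos[OF T, of j] by (intro mult_mono) (auto simp: order_less_imp_le pos[OF T])
  ultimately show False by simp
qed

lemma S2:
  assumes d: "k\<noteq>l" "k\<noteq>m" "l\<noteq>m" and e: "eps k m \<noteq> eps l m"
  shows "eps k l = 1"
proof (rule ccontr)
  assume "eps k l \<noteq> 1"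
  then have kl: "eps k l = -1" using sig_pm[OF S d(1)] by auto
  have km: "eps k m = - eps l m" using e sig_pm[OF S d(2)] sig_pm[OF S d(3)] by auto
  have eq: "a (i + unit_vec k) * a (i + unit_vec l) = a i ^2 - 1" for i
  proof -
    have "eps l m * a (i + unit_vec l) * (a (i + unit_vec k)^2 - a i^2)
       - (- eps l m) * a (i + unit_vec k) * (a (i + unit_vec l)^2 - a i^2)
       + eps k l * ((- eps l m) * a (i + unit_vec l) - eps l m * a (i + unit_vec k)) = 0"
      using E_lemma[OF T d, of i] km by simp
    note h = this
    have nz: "eps l m \<noteq> 0" using sig_pm[OF S d(3)] by auto
    show ?thesis using F2[OF h nz pos[OF T] pos[OF T]] kl by simp
  qed
  obtain j where j: "\<forall>x. a j \<le> a x" using ex_min[of a] pos[OF T] by blast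
  have "a j * a j \<le> a (j + unit_vec k) * a (j + unit_vec l)"
    using j pos[OF T, of j] by (intro mult_mono) (auto simp: order_less_imp_le pos[OF T])
  then show False using eq[of j] by (simp add: power2_eq_square)
qed

lemma K1:
  assumes d: "k\<noteq>l" and kl: "eps k l = -1"
  shows "a (i + unit_vec k) = a (i + unit_vec l)"
proof -
  obtain m where m: "m \<noteq> k" "m \<noteq> l" using third[OF C] by blast
  have d3: "k\<noteq>l" "k\<noteq>m" "l\<noteq>m" using d m by auto
  have e: "eps k m = eps l m" using S2[OF d3] kl by fastforce
  have "eps k m * a (i + unit_vec l) * (a (i + unit_vec k)^2 - a i^2)
       - eps k m * a (i + unit_vec k) * (a (i + unit_vec l)^2 - a i^2)
       + eps k l * (eps k m * a (i + unit_vec l) - eps k m * a (i + unit_vec k)) = 0"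
    using E_lemma[OF T d3, of i] e by simp
  note h = this
    have nz: "eps k m \<noteq> 0" using sig_pm[OF S d3(2)] by auto
  show ?thesis using F1[OF h nz pos[OF T] pos[OF T] pos[OF T]] kl by simp
qed

lemma K2:
  assumes d: "k\<noteq>l" and kl: "eps k l = 1"
  shows "a (i + unit_vec k) * a (i + unit_vec l) = a i ^2 + 1"
    and "a (i + unit_vec k + unit_vec l) = a i"
proof -
  obtain m where m: "m \<noteq> k" "m \<noteq> l" using third[OF C] by blast
  have d3: "k\<noteq>l" "k\<noteq>m" "l\<noteq>m" using d m by auto
  have e: "eps k m \<noteq> eps l m" using S1[OF d3] kl by fastforce
  have km: "eps k m = - eps l m" using e sig_pm[OF S d3(2)] sig_pm[OF S d3(3)] by auto
  have "eps l m * a (i + unit_vec l) * (a (i + unit_vec k)^2 - a i^2)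
       - (- eps l m) * a (i + unit_vec k) * (a (i + unit_vec l)^2 - a i^2)
       + eps k l * ((- eps l m) * a (i + unit_vec l) - eps l m * a (i + unit_vec k)) = 0"
    using E_lemma[OF T d3, of i] km by simp
  note h = this
    have nz: "eps l m \<noteq> 0" using sig_pm[OF S d3(3)] by auto
  show 1: "a (i + unit_vec k) * a (i + unit_vec l) = a i ^2 + 1"
    using F2[OF h nz pos[OF T] pos[OF T]] kl by simp
  have "a (i + unit_vec l) * a (i + unit_vec k) - a i * a (i + unit_vec k + unit_vec l) = 1"
    using tile[OF T d] kl by simp
  moreover have "a (i + unit_vec l) * a (i + unit_vec k) = a i * a i + 1" using 1 by (simp add: power2_eq_square mult.commute)
  ultimately have "a i * a (i + unit_vec k + unit_vec l) = a i * a i" by linarith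
  then show "a (i + unit_vec k + unit_vec l) = a i" using pos[OF T, of i] by (metis mult_cancel_left less_irrefl)
qed

lemma Diag: "a (i + unit_vec k) ^ 2 - a i * a (i + unit_vec k + unit_vec k) = -1"
proof -
  obtain l where l: "l \<noteq> k" using third[OF C] by blast
  then have d: "k \<noteq> l" by simp
  show ?thesis
  proof (cases "eps k l = 1")
    case True
    have "a (i + unit_vec k + unit_vec k) * a (i + unit_vec k + unit_vec l) = a (i + unit_vec k) ^2 + 1"
      using K2(1)[OF d True, of "i + unit_vec k"] by simp
    then show ?thesis using K2(2)[OF d True, of i] by (simp add: algebra_simps)
  next
    case False
    then have kl: "eps k l = -1" using sig_pm[OF S d] by auto
    have "a (i + unit_vec l) * a (i + unit_vec k) - a i * a (i + unit_vec k + unit_vec l) = -1"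
      using tile[OF T d] kl by simp
    moreover have "a (i + unit_vec l) = a (i + unit_vec k)" using K1[OF d kl] by simp
    moreover have "a (i + unit_vec k + unit_vec k) = a (i + unit_vec k + unit_vec l)" using K1[OF d kl, of "i + unit_vec k"] by simp
    ultimately show ?thesis by (simp add: power2_eq_square)
  qed
qed

end


lemma fib_gt: assumes "m \<ge> (1::nat)" shows "fib (2*m-1) < fib (2*m+1)"
proof -
  obtain n where n: "m = Suc n" using assms by (cases m) auto
  have "fib (2*n+1+2) = fib (2*n+1+1) + fib (2*n+1)" by (rule fib_plus_2)
  moreover have "fib (2*n+1+1) > 0" by (intro fib_neq_0_nat) auto
  ultimately have "fib (2*n+1) < fib (2*n+1+2)" by linarith
  moreover have "2*m-1 = 2*n+1" "2*m+1 = 2*n+1+2" using n by auto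
  ultimately show ?thesis by simp
qed

lemma fib_rec3: assumes "m \<ge> (1::nat)"
  shows "int (fib (2*(m+1)+1)) = 3 * int (fib (2*m+1)) - int (fib (2*m-1))"
proof -
  obtain n where n: "m = Suc n" using assms by (cases m) auto
  have "fib (2*n+1+4) + fib (2*n+1) = 3 * fib (2*n+1+2)" by (rule fib_step)
  then have "int (fib (2*n+1+4)) + int (fib (2*n+1)) = 3 * int (fib (2*n+1+2))"
    by (metis of_nat_add of_nat_mult of_nat_numeral)
  moreover have "2*(m+1)+1 = 2*n+1+4" "2*m+1 = 2*n+1+2" "2*m-1 = 2*n+1" using n by auto
  ultimately show ?thesis by simp
qed

lemma descent:
  fixes x y :: int
  assumes "x>0" "y>0" "x^2+y^2+1 = 3*x*y"
  shows "(x=1 \<and> y=1) \<or> (\<exists>m\<ge>1. (x = int (fib (2*m-1)) \<and> y = int (fib (2*m+1)))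
            \<or> (x = int (fib (2*m+1)) \<and> y = int (fib (2*m-1))))"
  using assms
proof (induction "nat (x+y)" arbitrary: x y rule: less_induct)
  case less
  consider "x = y" | "x < y" | "y < x" by linarith
  then show ?case
  proof cases
    case 1
    then have "x*x = 1" using less.prems(3) by (simp add: power2_eq_square algebra_simps)
    then have "x = 1" using less.prems(1) by (simp add: pos_zmult_eq_1_iff)
    then show ?thesis using 1 by simp
  next
    case 2
    define z where "z = 3*x - y"
    have zy: "z*y = x^2+1" using less.prems(3) unfolding z_def by (simp add: algebra_simps power2_eq_square)
    have zpos: "z > 0" using zy less.prems(2) by (metis zero_less_mult_pos2 add_pos_pos zero_less_one zero_less_power2 less.prems(1) less_irrefl mult.commute)
    have zx: "z \<le> x"
    proof (rule ccontr)
      assume "\<not> z \<le> x"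
      then have "(x+1)*(x+1) \<le> z*y" using 2 less.prems by (intro mult_mono) auto
      then show False using zy less.prems(1) by (simp add: algebra_simps power2_eq_square)
    qed
    have Q: "z^2 + x^2 + 1 = 3*z*x" using zy unfolding z_def by (simp add: algebra_simps power2_eq_square)
    have "nat (z + x) < nat (x + y)" using zx 2 zpos by simp
    then have IH: "(z=1 \<and> x=1) \<or> (\<exists>m\<ge>1. (z = int (fib (2*m-1)) \<and> x = int (fib (2*m+1)))
            \<or> (z = int (fib (2*m+1)) \<and> x = int (fib (2*m-1))))"
      using less.hyps zpos less.prems(1) Q by blast
    then show ?thesis
    proof (elim disjE exE conjE)
      assume "z = 1" "x = 1"
      then have "y = 2" unfolding z_def by simp
      then show ?thesis using \<open>x = 1\<close> by (intro disjI2 exI[of _ 1]) (simp add: numeral_eq_Suc)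
    next
      fix m :: nat assume m: "m \<ge> 1" and h: "z = int (fib (2*m-1))" "x = int (fib (2*m+1))"
      have "y = int (fib (2*(m+1)+1))" using fib_rec3[OF m] h unfolding z_def by simp
      moreover have "x = int (fib (2*(m+1)-1))" using h by simp
      ultimately show ?thesis by (intro disjI2 exI[of _ "m+1"]) simp
    next
      fix m :: nat assume m: "m \<ge> 1" and h: "z = int (fib (2*m+1))" "x = int (fib (2*m-1))"
      then show ?thesis using fib_gt[OF m] zx by simp
    qed
  next
    case 3
    define z where "z = 3*y - x"
    have zy: "z*x = y^2+1" using less.prems(3) unfolding z_def by (simp add: algebra_simps power2_eq_square)
    have zpos: "z > 0" using zy less.prems(1) by (metis zero_less_mult_pos2 add_pos_pos zero_less_one zero_less_power2 less.prems(2) less_irrefl mult.commute)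
    have zx: "z \<le> y"
    proof (rule ccontr)
      assume "\<not> z \<le> y"
      then have "(y+1)*(y+1) \<le> z*x" using 3 less.prems by (intro mult_mono) auto
      then show False using zy less.prems(2) by (simp add: algebra_simps power2_eq_square)
    qed
    have Q: "y^2 + z^2 + 1 = 3*y*z" using zy unfolding z_def by (simp add: algebra_simps power2_eq_square)
    have "nat (y + z) < nat (x + y)" using zx 3 zpos by simp
    then have IH: "(y=1 \<and> z=1) \<or> (\<exists>m\<ge>1. (y = int (fib (2*m-1)) \<and> z = int (fib (2*m+1)))
            \<or> (y = int (fib (2*m+1)) \<and> z = int (fib (2*m-1))))"
      using less.hyps zpos less.prems(2) Q by blast
    then show ?thesis
    proof (elim disjE exE conjE)
      assume "y = 1" "z = 1"
      then have "x = 2" unfolding z_def by simp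
      then show ?thesis using \<open>y = 1\<close> by (intro disjI2 exI[of _ 1]) (simp add: numeral_eq_Suc)
    next
      fix m :: nat assume m: "m \<ge> 1" and h: "y = int (fib (2*m-1))" "z = int (fib (2*m+1))"
      then show ?thesis using fib_gt[OF m] zx by simp
    next
      fix m :: nat assume m: "m \<ge> 1" and h: "y = int (fib (2*m+1))" "z = int (fib (2*m-1))"
      have "x = int (fib (2*(m+1)+1))" using fib_rec3[OF m] h unfolding z_def by simp
      moreover have "y = int (fib (2*(m+1)-1))" using h by simp
      ultimately show ?thesis by (intro disjI2 exI[of _ "m+1"]) simp
    qed
  qed
qed


lemma line:
  fixes g :: "int \<Rightarrow> int"
  assumes pos: "\<forall>t. g t > 0" and rec: "\<forall>t. g t * g (t+2) = g (t+1)^2 + 1"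
  shows "g t^2 + g (t+1)^2 + 1 = 3 * g t * g (t+1)"
proof -
  define Q where "Q t \<longleftrightarrow> g t^2 + g (t+1)^2 + 1 = 3 * g t * g (t+1)" for t
  obtain t0 where t0: "\<forall>t. g t0 \<le> g t" using ex_min[of g] pos by blast
  define p x y where "p = g t0" and "x = g (t0-1)" and "y = g (t0+1)"
  have xy: "x*y = p^2 + 1" using rec[rule_format, of "t0-1"] by (simp add: p_def x_def y_def add.commute)
  have xp: "x \<ge> p" and yp: "y \<ge> p" and pp: "p > 0" using t0 pos by (auto simp: p_def x_def y_def)
  have "x = p \<or> y = p"
  proof (rule ccontr)
    assume "\<not> ?thesis"
    then have "(p+1)*(p+1) \<le> x*y" using xp yp pp by (intro mult_mono) auto
    then show False using xy pp by (simp add: algebra_simps power2_eq_square)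
  qed
  then have "p = 1 \<and> (y = 1 \<or> y = 2)"
  proof
    assume "x = p"
    then have "p * (y - p) = 1" using xy by (simp add: algebra_simps power2_eq_square)
    then show ?thesis using pp by (simp add: pos_zmult_eq_1_iff)
  next
    assume "y = p"
    then have "p * (x - p) = 1" using xy by (simp add: algebra_simps power2_eq_square)
    then show ?thesis using pp \<open>y = p\<close> by (simp add: pos_zmult_eq_1_iff)
  qed
  then have Q0: "Q t0" unfolding Q_def p_def y_def by auto
  have fwd: "Q (s+1)" if "Q s" for s
  proof -
    have "g s * g (s+2) = g s * (3 * g (s+1) - g s)"
      using rec[rule_format, of s] that unfolding Q_def by (simp add: algebra_simps power2_eq_square)
    then have h: "g (s+2) = 3 * g (s+1) - g s" using pos[rule_format, of s] by simp
    have ss: "s+1+1 = s+2" by simp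
    have q: "g s^2 + g (s+1)^2 + 1 = 3 * g s * g (s+1)" using that unfolding Q_def .
    show ?thesis unfolding Q_def ss h using q by algebra
  qed
  have bwd: "Q (s-1)" if "Q s" for s
  proof -
    have "g (s+1) * g (s-1) = g (s+1) * (3 * g s - g (s+1))"
      using rec[rule_format, of "s-1"] that unfolding Q_def by (simp add: algebra_simps power2_eq_square)
    then have h: "g (s-1) = 3 * g s - g (s+1)" using pos[rule_format, of "s+1"] by simp
    have ss: "s-1+1 = s" by simp
    have q: "g s^2 + g (s+1)^2 + 1 = 3 * g s * g (s+1)" using that unfolding Q_def .
    show ?thesis unfolding Q_def ss h using q by algebra
  qed
  have "Q (t0 + int n) \<and> Q (t0 - int n)" for n :: nat
  proof (induction n)
    case 0 then show ?case using Q0 by simp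
  next
    case (Suc n)
    then have "Q (t0 + int n + 1)" "Q (t0 - int n - 1)" using fwd bwd by auto
    moreover have "t0 + int n + 1 = t0 + int (Suc n)" "t0 - int n - 1 = t0 - int (Suc n)" by simp_all
    ultimately show ?case by metis
  qed
  moreover have "t = t0 + int (nat (t - t0)) \<or> t = t0 - int (nat (t0 - t))" by linarith
  ultimately have "Q t" by metis
  then show ?thesis unfolding Q_def .
qed

theorem mainTheorem8:
  fixes eps :: "'n::finite \<Rightarrow> 'n \<Rightarrow> int" and a :: "int ^ 'n \<Rightarrow> int"
  assumes "CARD('n) \<ge> 3"
    and "signature_matrix eps"
    and "SL2_tiling eps a"
  shows "(\<forall>i. \<exists>m::nat. m \<ge> 1 \<and> a i = int (fib (2 * m - 1))) \<and>
         (\<forall>i k. a (i + unit_vec k) ^ 2 - a i * a (i + unit_vec k + unit_vec k) = -1 \<and> eps k k = -1)"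
proof (intro conjI allI)
  fix i k
  show "a (i + unit_vec k) ^ 2 - a i * a (i + unit_vec k + unit_vec k) = -1"
    by (rule Diag[OF assms])
  show "eps k k = -1" using assms(2) unfolding signature_matrix_def by blast
next
  fix i
  obtain k :: 'n where True by blast
  define w :: "int \<Rightarrow> int ^ 'n" where "w t = (\<chi> j. if j = k then t else 0)" for t
  have w1: "w (t+1) = w t + unit_vec k" for t
    by (simp add: w_def vec_eq_iff unit_vec_def axis_def)
  have w0: "w 0 = 0" by (simp add: w_def vec_eq_iff)
  define g where "g t = a (i + w t)" for t
  have gpos: "\<forall>t. g t > 0" using pos[OF assms(3)] by (simp add: g_def)
  have grec: "\<forall>t. g t * g (t+2) = g (t+1)^2 + 1"
  proof
    fix t
    have "w (t+2) = w t + unit_vec k + unit_vec k" using w1[of "t+1"] w1[of t]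
      by (simp add: add.assoc)
    then show "g t * g (t+2) = g (t+1)^2 + 1"
      using Diag[OF assms, of "i + w t" k] w1[of t] by (simp add: g_def add.assoc)
  qed
  have "g 0^2 + g (0+1)^2 + 1 = 3 * g 0 * g (0+1)" by (rule line[OF gpos grec])
  then have Q: "a i^2 + g 1^2 + 1 = 3 * a i * g 1" by (simp add: g_def w0)
  have D: "(a i=1 \<and> g 1=1) \<or> (\<exists>m\<ge>1. (a i = int (fib (2*m-1)) \<and> g 1 = int (fib (2*m+1)))
            \<or> (a i = int (fib (2*m+1)) \<and> g 1 = int (fib (2*m-1))))"
    using descent[OF _ _ Q] pos[OF assms(3), of i] gpos by blast
  from D show "\<exists>m::nat. m \<ge> 1 \<and> a i = int (fib (2 * m - 1))"
  proof (elim disjE exE conjE)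
    assume "a i = 1" then show ?thesis by (intro exI[of _ 1]) simp
  next
    fix m :: nat assume "m \<ge> 1" "a i = int (fib (2*m-1))"
    then show ?thesis by blast
  next
    fix m :: nat assume "m \<ge> 1" "a i = int (fib (2*m+1))"
    then show ?thesis by (intro exI[of _ "m+1"]) simp
  qed
qed

end
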